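(* Let $T$ be a tree on $n$ vertices, let $v_1$ and $v_c$ be two non-adjacent vertices of $T$, let $v_1, v_2, \dots, v_c$ be the unique path in $T$ from $v_1$ to $v_c$ (so $c \ge 3$), and let $G$ be the graph obtained from $T$ by adding the edge $v_1v_c$. Define the subtrees $T_1,\dots,T_c$ with $n_j=|V(T_j)|$ as in the context, and order the vertices of $T$ (and $G$) so that the vertices of $T_1$ come first, then those of $T_2$, and so on up to $T_c$. For vertices $a,b$ of $G$ let $\sigma_{a,b}$ be the number of spanning forests of $G$ consisting of two trees, one containing $a$ and the other containing $b$ (with $\sigma_{a,a}=0$), and let $\Sigma=[\sigma_{a,b}]_{a,b=1}^n$. Let $D$ be the distance matrix of $T$. Then $$\Sigma = cD + \tilde{J},\qquad \text{where } \tilde{J} = \left[-(j-k)^2 J_{n_j\times n_k}\right]_{j,k=1,\dots,c}$$ is the block matrix whose $(j,k)$ block is $-(j-k)^2$ times the $n_j\times n_k$ all-ones matrix $J_{n_j\times n_k}$.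
   Context: Subtrees: $T_1$ is the connected component containing $v_1$ of the graph obtained from $T$ by deleting edge $v_1v_2$; $T_c$ is the component containing $v_c$ after deleting edge $v_{c-1}v_c$; for $2\le j\le c-1$, $T_j$ is the component containing $v_j$ after deleting the edges $v_{j-1}v_j$ and $v_jv_{j+1}$. Thus $n=n_1+\dots+n_c$. The distance matrix of a tree has $(a,b)$ entry equal to the graph distance between $a$ and $b$. *)

theory Defs
  imports Main
begin

definition graph :: "'a set \<Rightarrow> 'a set set \<Rightarrow> bool" where
  "graph V E \<longleftrightarrow> finite V \<and> (\<forall>e\<in>E. \<exists>x y. x \<in> V \<and> y \<in> V \<and> x \<noteq> y \<and> e = {x, y})"

definition walk :: "'a set set \<Rightarrow> 'a list \<Rightarrow> bool" where
  "walk E xs \<longleftrightarrow> xs \<noteq> [] \<and> (\<forall>i. Suc i < length xs \<longrightarrow> {xs ! i, xs ! Suc i} \<in> E)"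

definition reach :: "'a set set \<Rightarrow> 'a \<Rightarrow> 'a \<Rightarrow> bool" where
  "reach E x y \<longleftrightarrow> (\<exists>xs. walk E xs \<and> hd xs = x \<and> last xs = y)"

definition connected_graph :: "'a set \<Rightarrow> 'a set set \<Rightarrow> bool" where
  "connected_graph V E \<longleftrightarrow> (\<forall>x\<in>V. \<forall>y\<in>V. reach E x y)"

definition is_cycle :: "'a set set \<Rightarrow> 'a list \<Rightarrow> bool" where
  "is_cycle E xs \<longleftrightarrow> length xs \<ge> 3 \<and> distinct xs \<and> walk E xs \<and> {last xs, hd xs} \<in> E"

definition acyclic_graph :: "'a set set \<Rightarrow> bool" where
  "acyclic_graph E \<longleftrightarrow> \<not> (\<exists>xs. is_cycle E xs)"

definition is_tree :: "'a set \<Rightarrow> 'a set set \<Rightarrow> bool" where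
  "is_tree V E \<longleftrightarrow> graph V E \<and> V \<noteq> {} \<and> connected_graph V E \<and> acyclic_graph E"

definition gdist :: "'a set set \<Rightarrow> 'a \<Rightarrow> 'a \<Rightarrow> nat" where
  "gdist E x y = (LEAST n. \<exists>xs. walk E xs \<and> hd xs = x \<and> last xs = y \<and> length xs = Suc n)"

definition comp :: "'a set \<Rightarrow> 'a set set \<Rightarrow> 'a \<Rightarrow> 'a set" where
  "comp V E x = {y \<in> V. reach E x y}"

text \<open>Vertex set of the subtree T_(j+1) (0-based index j) for the path vs = [v_1,...,v_c]:
  the component of vs!j after deleting the path edges incident to vs!j.\<close>
definition subtree :: "'a set \<Rightarrow> 'a set set \<Rightarrow> 'a list \<Rightarrow> nat \<Rightarrow> 'a set" where
  "subtree V E vs j = comp V (E - {{vs ! i, vs ! Suc i} | i. Suc i < length vs \<and> (i = j \<or> Suc i = j)}) (vs ! j)"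

definition two_forests :: "'a set \<Rightarrow> 'a set set \<Rightarrow> 'a \<Rightarrow> 'a \<Rightarrow> 'a set set set" where
  "two_forests V E a b = {F. F \<subseteq> E \<and> acyclic_graph F \<and> \<not> reach F a b \<and>
                             (\<forall>x\<in>V. reach F a x \<or> reach F b x)}"

definition sigma :: "'a set \<Rightarrow> 'a set set \<Rightarrow> 'a \<Rightarrow> 'a \<Rightarrow> nat" where
  "sigma V E a b = card (two_forests V E a b)"

end

theory Submission
  imports Defs
begin

lemma walk_single[simp]: "walk F [x]"
  by (simp add: walk_def)

lemma walk_Cons2[simp]: "walk F (x # y # ys) \<longleftrightarrow> {x, y} \<in> F \<and> walk F (y # ys)"
proof
  assume "walk F (x # y # ys)"
  then show "{x, y} \<in> F \<and> walk F (y # ys)" unfolding walk_def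
    by (metis Suc_less_eq length_Cons nth_Cons_0 nth_Cons_Suc zero_less_Suc list.discI)
next
  assume a: "{x, y} \<in> F \<and> walk F (y # ys)"
  show "walk F (x # y # ys)" unfolding walk_def
  proof (intro conjI allI impI)
    fix i assume "Suc i < length (x # y # ys)"
    then show "{(x # y # ys) ! i, (x # y # ys) ! Suc i} \<in> F"
      using a unfolding walk_def by (cases i) auto
  qed simp
qed

lemma walk_Cons_iff: "walk F (x # ys) \<longleftrightarrow> (ys = [] \<or> ({x, hd ys} \<in> F \<and> walk F ys))"
  by (cases ys) auto

lemma walk_mono: "walk F xs \<Longrightarrow> F \<subseteq> G \<Longrightarrow> walk G xs"
  unfolding walk_def by auto

lemma walk_append: "walk F xs \<Longrightarrow> walk F ys \<Longrightarrow> last xs = hd ys \<Longrightarrow> walk F (xs @ tl ys)"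
proof (induction xs rule: induct_list012)
  case 1 then show ?case by (simp add: walk_def)
next
  case (2 x) then show ?case by (cases ys) auto
next
  case (3 x y zs) then show ?case by auto
qed

lemma walk_rev: "walk F xs \<Longrightarrow> walk F (rev xs)"
proof (induction xs rule: induct_list012)
  case 1 then show ?case by (simp add: walk_def)
next
  case (2 x) then show ?case by simp
next
  case (3 x y zs)
  have "walk F (rev (y # zs))" using 3 by simp
  moreover have "walk F [y, x]" using 3 by (simp add: insert_commute)
  ultimately have "walk F (rev (y # zs) @ tl [y, x])"
    by (intro walk_append) auto
  then show ?case by simp
qed

lemma walk_take: "walk F xs \<Longrightarrow> 0 < n \<Longrightarrow> walk F (take n xs)"
  unfolding walk_def by auto

lemma walk_drop: "walk F xs \<Longrightarrow> n < length xs \<Longrightarrow> walk F (drop n xs)"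
  unfolding walk_def by auto

lemma walk_nonempty: "walk F xs \<Longrightarrow> xs \<noteq> []"
  by (simp add: walk_def)

lemma walk_edge: "walk F xs \<Longrightarrow> Suc i < length xs \<Longrightarrow> {xs ! i, xs ! Suc i} \<in> F"
  by (simp add: walk_def)

lemma reach_refl[simp]: "reach F x x"
  unfolding reach_def by (rule exI[of _ "[x]"]) simp

lemma reach_edge: "{x, y} \<in> F \<Longrightarrow> reach F x y"
  unfolding reach_def by (rule exI[of _ "[x, y]"]) simp

lemma reach_sym: "reach F x y \<Longrightarrow> reach F y x"
  unfolding reach_def
  by (metis hd_rev last_rev walk_rev)

lemma reach_trans: "reach F x y \<Longrightarrow> reach F y z \<Longrightarrow> reach F x z"
  unfolding reach_def
proof (elim exE conjE)
  fix xs ys assume *: "walk F xs" "hd xs = x" "last xs = y" "walk F ys" "hd ys = y" "last ys = z"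
  then have "walk F (xs @ tl ys)" by (intro walk_append) auto
  moreover have "hd (xs @ tl ys) = x" using * walk_nonempty[of F xs] by simp
  moreover have "last (xs @ tl ys) = z" using * walk_nonempty
    by (cases ys) (auto)
  ultimately show "\<exists>xs. walk F xs \<and> hd xs = x \<and> last xs = z" by blast
qed

lemma reach_mono: "reach F x y \<Longrightarrow> F \<subseteq> G \<Longrightarrow> reach G x y"
  unfolding reach_def using walk_mono by blast

lemma walk_induct_P:
  assumes "walk F xs"
    and "\<And>u. P u u" and "\<And>u v w. P u v \<Longrightarrow> P v w \<Longrightarrow> P u w"
    and "\<And>u w. {u, w} \<in> F \<Longrightarrow> P u w"
  shows "P (hd xs) (last xs)"
  using assms(1)
proof (induction xs rule: induct_list012)
  case 1 then show ?case by (simp add: walk_def)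
next
  case (2 x) then show ?case using assms(2)[of x] by simp
next
  case (3 x y zs)
  then have h1: "P y (last (y # zs))" by simp
  have h2: "P x y" using 3 assms(4)[of x y] by simp
  have "P x (last (y # zs))" using assms(3)[OF h2 h1] .
  then show ?case by simp
qed

lemma reach_induct_P:
  assumes "reach F x y"
    and "\<And>u. P u u" and "\<And>u v w. P u v \<Longrightarrow> P v w \<Longrightarrow> P u w"
    and "\<And>u w. {u, w} \<in> F \<Longrightarrow> P u w"
  shows "P x y"
proof -
  obtain xs where xs: "walk F xs" "hd xs = x" "last xs = y" using assms(1) unfolding reach_def by blast
  have "P (hd xs) (last xs)" using xs(1) assms(2,3,4) by (rule walk_induct_P)
  then show ?thesis using xs by simp
qed

lemma reach_subst:
  assumes "reach F x y" and "\<And>u w. {u, w} \<in> F \<Longrightarrow> reach G u w"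
  shows "reach G x y"
  using assms(1)
proof (rule reach_induct_P)
  show "\<And>u v w. reach G u v \<Longrightarrow> reach G v w \<Longrightarrow> reach G u w" by (rule reach_trans)
qed (simp_all add: assms(2))

lemma reach_insert:
  assumes "reach (insert {u, v} H) x y"
  shows "reach H x y \<or> (reach H x u \<and> reach H v y) \<or> (reach H x v \<and> reach H u y)"
  using assms(1)
proof (rule reach_induct_P[where P = "\<lambda>x y. reach H x y \<or> (reach H x u \<and> reach H v y) \<or> (reach H x v \<and> reach H u y)"])
  fix p q r
  assume "reach H p q \<or> reach H p u \<and> reach H v q \<or> reach H p v \<and> reach H u q"
    "reach H q r \<or> reach H q u \<and> reach H v r \<or> reach H q v \<and> reach H u r"
  then show "reach H p r \<or> reach H p u \<and> reach H v r \<or> reach H p v \<and> reach H u r"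
    using reach_trans[of H p q r] reach_trans[of H p q u] reach_trans[of H p q v]
      reach_trans[of H v q r] reach_trans[of H p u r] reach_trans[of H u q r] reach_trans[of H p v r]
    by blast
next
  fix p q assume "{p, q} \<in> insert {u, v} H"
  then show "reach H p q \<or> reach H p u \<and> reach H v q \<or> reach H p v \<and> reach H u q"
    by (auto simp: doubleton_eq_iff intro: reach_edge)
qed simp

lemma reach_iff_eq: "reach F x y \<longleftrightarrow> reach F x = reach F y"
proof
  assume r: "reach F x y"
  show "reach F x = reach F y"
  proof
    fix z show "reach F x z = reach F y z"
      using r reach_sym[OF r] reach_trans[of F x y z] reach_trans[of F y x z] by blast
  qed
next
  assume "reach F x = reach F y"
  then show "reach F x y" by (metis reach_refl)
qed

lemma reach_cls1:
  assumes "reach F x a \<or> reach F x b" "reach F y a \<or> reach F y b" "\<not> reach F x y"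
  shows "(reach F a x \<and> reach F b y) \<or> (reach F b x \<and> reach F a y)"
  using assms reach_sym[of F x a] reach_sym[of F x b] reach_sym[of F y a] reach_sym[of F y b]
    reach_trans[of F x a y] reach_trans[of F x b y] by blast

lemma reach_cls2:
  assumes "reach F x u \<or> reach F x v" "reach F a u \<or> reach F a v" "reach F b u \<or> reach F b v"
    "\<not> reach F a b"
  shows "reach F a x \<or> reach F b x"
  using assms reach_sym[of F x u] reach_sym[of F x v] reach_sym[of F b u] reach_sym[of F b v]
    reach_trans[of F a u x] reach_trans[of F a v x] reach_trans[of F b u x] reach_trans[of F b v x]
    reach_trans[of F a u b] reach_trans[of F a v b] by blast

lemma reach_cls3:
  assumes "(reach F a x \<and> reach F b y) \<or> (reach F b x \<and> reach F a y)" "reach F x y"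
  shows "reach F a b"
  using assms reach_sym[of F b y] reach_sym[of F x y] reach_sym[of F b x]
    reach_trans[of F a x y] reach_trans[of F a y b] reach_trans[of F a y x] reach_trans[of F a x b] by blast

lemma reach_cls4:
  assumes "(reach F a x \<and> reach F b y) \<or> (reach F b x \<and> reach F a y)" "reach F a b"
  shows "reach F x y"
  using assms reach_sym[of F a x] reach_sym[of F b x] reach_sym[of F a b]
    reach_trans[of F x a b] reach_trans[of F x b y] reach_trans[of F x b a] reach_trans[of F x a y] by blast

lemma reach_insert_rev:
  "reach H x y \<Longrightarrow> reach (insert e H) x y"
  by (erule reach_mono) blast

lemma walk_suffix: "walk F (ws1 @ zs) \<Longrightarrow> zs \<noteq> [] \<Longrightarrow> walk F zs"
  using walk_drop[of F "ws1 @ zs" "length ws1"] by simp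

lemma walk_distinct:
  "walk F xs \<Longrightarrow> \<exists>ys. walk F ys \<and> distinct ys \<and> hd ys = hd xs \<and> last ys = last xs \<and> length ys \<le> length xs"
proof (induction xs)
  case Nil then show ?case by (simp add: walk_def)
next
  case (Cons x ys)
  show ?case
  proof (cases "ys = []")
    case True then show ?thesis using Cons by (intro exI[of _ "[x]"]) auto
  next
    case False
    then have wy: "walk F ys" and ex: "{x, hd ys} \<in> F" using Cons.prems walk_Cons_iff[of F x ys] by auto
    from Cons.IH[OF wy] obtain ws where ws: "walk F ws" "distinct ws" "hd ws = hd ys" "last ws = last ys" "length ws \<le> length ys"
      by blast
    have wsne: "ws \<noteq> []" using ws(1) walk_nonempty by blast
    show ?thesis
    proof (cases "x \<in> set ws")
      case True
      then obtain ws1 ws2 where sp: "ws = ws1 @ x # ws2" by (meson split_list)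
      have "walk F (x # ws2)" using ws(1) sp walk_suffix by blast
      moreover have "distinct (x # ws2)" using ws(2) sp by simp
      moreover have "last (x # ws2) = last (x # ys)" using ws(4) sp False by simp
      moreover have "length (x # ws2) \<le> length (x # ys)" using ws(5) sp by simp
      ultimately show ?thesis by (intro exI[of _ "x # ws2"]) simp
    next
      case False
      have "walk F (x # ws)" using ws ex wsne walk_Cons_iff[of F x ws] by auto
      moreover have "distinct (x # ws)" using ws(2) False by simp
      moreover have "last (x # ws) = last (x # ys)" using ws(4) wsne \<open>ys \<noteq> []\<close> by simp
      ultimately show ?thesis using ws(5) by (intro exI[of _ "x # ws"]) simp
    qed
  qed
qed

definition forest :: "'a set set \<Rightarrow> bool" where
  "forest F \<longleftrightarrow> (\<forall>x y. {x, y} \<in> F \<longrightarrow> x \<noteq> y \<longrightarrow> \<not> reach (F - {{x, y}}) x y)"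

lemma forestD: "forest F \<Longrightarrow> {x, y} \<in> F \<Longrightarrow> x \<noteq> y \<Longrightarrow> \<not> reach (F - {{x, y}}) x y"
  unfolding forest_def by blast

lemma acyclic_imp_forest: "acyclic_graph F \<Longrightarrow> forest F"
  unfolding forest_def
proof (intro allI impI notI)
  fix x y assume ac: "acyclic_graph F" and e: "{x, y} \<in> F" and ne: "x \<noteq> y"
    and r: "reach (F - {{x, y}}) x y"
  from r obtain xs where xs: "walk (F - {{x, y}}) xs" "hd xs = x" "last xs = y" unfolding reach_def by blast
  from walk_distinct[OF xs(1)] obtain ys where ys: "walk (F - {{x, y}}) ys" "distinct ys" "hd ys = x" "last ys = y"
    using xs by auto
  have yne: "ys \<noteq> []" using ys(1) walk_nonempty by blast
  have l2: "length ys \<ge> 2"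
  proof (rule ccontr)
    assume "\<not> 2 \<le> length ys"
    then have "length ys = 1" using yne by (cases ys) (auto simp: not_le)
    then obtain z where "ys = [z]" by (auto simp: length_Suc_conv)
    then show False using ys ne by simp
  qed
  have l3: "length ys \<ge> 3"
  proof (rule ccontr)
    assume "\<not> 3 \<le> length ys"
    then have "length ys = 2" using l2 by simp
    then obtain z w where zw: "ys = [z, w]"
      by (auto simp: length_Suc_conv numeral_2_eq_2)
    then show False using ys by simp
  qed
  have w: "walk F ys" using walk_mono[OF ys(1)] by blast
  have "{last ys, hd ys} \<in> F" using ys(3,4) e by (simp add: insert_commute)
  then have "is_cycle F ys" unfolding is_cycle_def
    using l3 ys(2) w by blast
  then show False using ac unfolding acyclic_graph_def by blast
qed

lemma forest_imp_acyclic: "forest F \<Longrightarrow> acyclic_graph F"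
  unfolding acyclic_graph_def
proof (rule notI, elim exE)
  fix xs assume fo: "forest F" and cy: "is_cycle F xs"
  let ?n = "length xs"
  have n3: "?n \<ge> 3" and di: "distinct xs" and wk: "walk F xs" and ce: "{last xs, hd xs} \<in> F"
    using cy unfolding is_cycle_def by auto
  have hd0: "hd xs = xs ! 0" using n3 by (cases xs) auto
  have last1: "last xs = xs ! (?n - 1)" using n3 by (intro last_conv_nth) auto
  have i1: "?n - 1 < ?n" "0 < ?n" "?n - 1 \<noteq> 0" using n3 by auto
  have "xs ! (?n - 1) \<noteq> xs ! 0" using nth_eq_iff_index_eq[OF di i1(1,2)] i1(3) by simp
  then have neq: "last xs \<noteq> hd xs" using hd0 last1 by simp
  have "walk (F - {{last xs, hd xs}}) xs"
    unfolding walk_def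
  proof (intro conjI allI impI)
    show "xs \<noteq> []" using n3 by auto
    fix i assume i: "Suc i < ?n"
    have "{xs ! i, xs ! Suc i} \<in> F" using wk i by (simp add: walk_def)
    moreover have "{xs ! i, xs ! Suc i} \<noteq> {last xs, hd xs}"
    proof
      assume "{xs ! i, xs ! Suc i} = {last xs, hd xs}"
      then have "(xs ! i = xs ! (?n - 1) \<and> xs ! Suc i = xs ! 0) \<or> (xs ! i = xs ! 0 \<and> xs ! Suc i = xs ! (?n - 1))"
        using hd0 last1 by (auto simp: doubleton_eq_iff)
      then show False
      proof
        assume h: "xs ! i = xs ! (?n - 1) \<and> xs ! Suc i = xs ! 0"
        have "i = ?n - 1" using h nth_eq_iff_index_eq[OF di, of i "?n - 1"] i n3 by auto
        then show False using i by simp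
      next
        assume h: "xs ! i = xs ! 0 \<and> xs ! Suc i = xs ! (?n - 1)"
        have xne: "xs \<noteq> []" using n3 by auto
        have "i = 0" using nth_eq_iff_index_eq[OF di, of i 0] i n3 h xne by auto
        moreover have "Suc i = ?n - 1" using nth_eq_iff_index_eq[OF di, of "Suc i" "?n - 1"] i n3 h by auto
        ultimately show False using n3 by simp
      qed
    qed
    ultimately show "{xs ! i, xs ! Suc i} \<in> F - {{last xs, hd xs}}" by simp
  qed
  then have "reach (F - {{last xs, hd xs}}) (hd xs) (last xs)" unfolding reach_def by blast
  then have "reach (F - {{last xs, hd xs}}) (last xs) (hd xs)" by (rule reach_sym)
  then show False using forestD[OF fo ce neq] by simp
qed

lemma forest_mono: "forest F \<Longrightarrow> G \<subseteq> F \<Longrightarrow> forest G"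
  unfolding forest_def
proof (intro allI impI notI)
  fix x y assume "\<forall>x y. {x, y} \<in> F \<longrightarrow> x \<noteq> y \<longrightarrow> \<not> reach (F - {{x, y}}) x y"
    "G \<subseteq> F" "{x, y} \<in> G" "x \<noteq> y" "reach (G - {{x, y}}) x y"
  moreover have "G - {{x, y}} \<subseteq> F - {{x, y}}" using calculation by blast
  ultimately show False using reach_mono[of "G - {{x, y}}" x y "F - {{x, y}}"] by blast
qed

lemma forest_insert:
  assumes fo: "forest H" and uv: "u \<noteq> v" and nr: "\<not> reach H u v"
  shows "forest (insert {u, v} H)"
  unfolding forest_def
proof (intro allI impI notI)
  fix x y assume e: "{x, y} \<in> insert {u, v} H" and xy: "x \<noteq> y"
    and r: "reach (insert {u, v} H - {{x, y}}) x y"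
  show False
  proof (cases "{x, y} = {u, v}")
    case True
    then have "reach H x y" using r reach_mono[of "insert {u, v} H - {{x, y}}" x y H] by blast
    then have "(x = u \<and> y = v) \<or> (x = v \<and> y = u)" using True by (auto simp: doubleton_eq_iff)
    then show False using True nr reach_sym[of H v u] \<open>reach H x y\<close> by blast
  next
    case False
    then have eH: "{x, y} \<in> H" using e by simp
    have "insert {u, v} H - {{x, y}} = insert {u, v} (H - {{x, y}})" using False by auto
    then have "reach (insert {u, v} (H - {{x, y}})) x y" using r by simp
    from reach_insert[OF this] have
      "reach (H - {{x, y}}) x y \<or> (reach (H - {{x, y}}) x u \<and> reach (H - {{x, y}}) v y) \<or>
       (reach (H - {{x, y}}) x v \<and> reach (H - {{x, y}}) u y)" .
    moreover have "\<not> reach (H - {{x, y}}) x y" using forestD[OF fo eH xy] .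
    ultimately have "reach (H - {{x, y}}) x u \<and> reach (H - {{x, y}}) v y \<or>
       reach (H - {{x, y}}) x v \<and> reach (H - {{x, y}}) u y" by blast
    then have "reach H x u \<and> reach H v y \<or> reach H x v \<and> reach H u y"
      using reach_mono[of "H - {{x, y}}" x u H] reach_mono[of "H - {{x, y}}" v y H]
        reach_mono[of "H - {{x, y}}" x v H] reach_mono[of "H - {{x, y}}" u y H] by blast
    have "reach H x y" using eH by (rule reach_edge)
    from \<open>reach H x u \<and> reach H v y \<or> reach H x v \<and> reach H u y\<close> have "reach H u v"
    proof
      assume "reach H x u \<and> reach H v y"
      then show "reach H u v" using \<open>reach H x y\<close> by (meson reach_sym reach_trans)
    next
      assume "reach H x v \<and> reach H u y"
      then show "reach H u v" using \<open>reach H x y\<close> by (meson reach_sym reach_trans)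
    qed
    then show False using nr by simp
  qed
qed

definition tree2 :: "'a set \<Rightarrow> 'a set set \<Rightarrow> bool" where
  "tree2 V T \<longleftrightarrow> (\<forall>e\<in>T. \<exists>x y. x \<in> V \<and> y \<in> V \<and> x \<noteq> y \<and> e = {x, y}) \<and> forest T \<and>
     (\<forall>x\<in>V. \<forall>y\<in>V. reach T x y)"

lemma tree_split:
  assumes t: "tree2 V T" and e: "{u, v} \<in> T" and x: "x \<in> V"
  shows "reach (T - {{u, v}}) x u \<or> reach (T - {{u, v}}) x v"
proof -
  have ed: "\<exists>p q. p \<in> V \<and> q \<in> V \<and> p \<noteq> q \<and> {u, v} = {p, q}" using t e unfolding tree2_def by blast
  then have u: "u \<in> V" by (auto simp: doubleton_eq_iff)
  have "\<forall>x\<in>V. \<forall>y\<in>V. reach T x y" using t unfolding tree2_def by blast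
  then have "reach T x u" using x u by blast
  moreover have "T \<subseteq> insert {u, v} (T - {{u, v}})" by blast
  ultimately have "reach (insert {u, v} (T - {{u, v}})) x u" by (rule reach_mono)
  from reach_insert[OF this] show ?thesis by blast
qed

lemma tree2_edge: "tree2 V T \<Longrightarrow> e \<in> T \<Longrightarrow> \<exists>x y. x \<in> V \<and> y \<in> V \<and> x \<noteq> y \<and> e = {x, y}"
  unfolding tree2_def by blast

lemma tree2_forest: "tree2 V T \<Longrightarrow> forest T"
  unfolding tree2_def by blast

lemma tree2_conn: "tree2 V T \<Longrightarrow> x \<in> V \<Longrightarrow> y \<in> V \<Longrightarrow> reach T x y"
  unfolding tree2_def by blast

lemma edge_in_V:
  assumes "\<exists>p q. p \<in> V \<and> q \<in> V \<and> p \<noteq> q \<and> {x, y} = {p, q}"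
  shows "x \<in> V" "y \<in> V" "x \<noteq> y"
proof -
  obtain p q where pq: "p \<in> V" "q \<in> V" "p \<noteq> q" "{x, y} = {p, q}" using assms by blast
  then have "(x = p \<and> y = q) \<or> (x = q \<and> y = p)" by (simp add: doubleton_eq_iff)
  then show "x \<in> V" "y \<in> V" "x \<noteq> y" using pq by blast+
qed

lemma GL:
  assumes t: "tree2 V T" and a: "a \<in> V" and b: "b \<in> V"
  shows "two_forests V T a b = (\<lambda>f. T - {f}) ` {f \<in> T. \<not> reach (T - {f}) a b}"
proof
  have fo: "forest T" using t by (rule tree2_forest)
  show "two_forests V T a b \<subseteq> (\<lambda>f. T - {f}) ` {f \<in> T. \<not> reach (T - {f}) a b}"
  proof
    fix F assume "F \<in> two_forests V T a b"
    then have FT: "F \<subseteq> T" and nab: "\<not> reach F a b" and cov: "\<And>x. x \<in> V \<Longrightarrow> reach F a x \<or> reach F b x"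
      unfolding two_forests_def by blast+
    have sides: "(reach F a x \<and> reach F b y) \<or> (reach F b x \<and> reach F a y)"
      if xyT: "{x, y} \<in> T" and xyF: "{x, y} \<notin> F" for x y
    proof -
      have xV: "x \<in> V" and yV: "y \<in> V" and xy: "x \<noteq> y"
        using edge_in_V[OF tree2_edge[OF t xyT]] by blast+
      have "F \<subseteq> T - {{x, y}}" using FT xyF by blast
      then have nr: "\<not> reach F x y"
        using forestD[OF fo xyT xy] reach_mono[of F x y "T - {{x, y}}"] by blast
      show ?thesis
        using reach_cls1[of F x a b y] cov[OF xV] cov[OF yV] nr reach_sym[of F a x] reach_sym[of F b x]
          reach_sym[of F a y] reach_sym[of F b y] by blast
    qed
    have "T - F \<noteq> {}"
    proof
      assume "T - F = {}"
      then have "F = T" using FT by blast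
      then show False using nab tree2_conn[OF t a b] by simp
    qed
    then obtain f where f: "f \<in> T" "f \<notin> F" by blast
    obtain x y where xy: "f = {x, y}" using tree2_edge[OF t f(1)] by blast
    have uniq: "g = f" if g: "g \<in> T" "g \<notin> F" for g
    proof (rule ccontr)
      assume gf: "g \<noteq> f"
      obtain x' y' where x'y': "g = {x', y'}" "x' \<noteq> y'" using tree2_edge[OF t g(1)] by blast
      let ?H = "T - {g}"
      have FH: "F \<subseteq> ?H" using FT g by blast
      have fH: "f \<in> ?H" using f gf by blast
      have s1: "(reach F a x \<and> reach F b y) \<or> (reach F b x \<and> reach F a y)"
        using sides[of x y] f xy by blast
      have s1': "(reach ?H a x \<and> reach ?H b y) \<or> (reach ?H b x \<and> reach ?H a y)"
        using s1 reach_mono[OF _ FH, of a x] reach_mono[OF _ FH, of b y]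
          reach_mono[OF _ FH, of b x] reach_mono[OF _ FH, of a y] by blast
      have "reach ?H x y" using reach_edge[of x y ?H] fH xy by blast
      then have r1: "reach ?H a b" using reach_cls3[OF s1'] by blast
      have s2: "(reach F a x' \<and> reach F b y') \<or> (reach F b x' \<and> reach F a y')"
        using sides[of x' y'] g x'y' by blast
      have s2': "(reach ?H a x' \<and> reach ?H b y') \<or> (reach ?H b x' \<and> reach ?H a y')"
        using s2 reach_mono[OF _ FH, of a x'] reach_mono[OF _ FH, of b y']
          reach_mono[OF _ FH, of b x'] reach_mono[OF _ FH, of a y'] by blast
      have "reach ?H x' y'" using reach_cls4[OF s2' r1] .
      moreover have "{x', y'} \<in> T" using g x'y' by blast
      ultimately show False using forestD[OF fo _ x'y'(2)] x'y'(1) by blast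
    qed
    have FTf: "F = T - {f}" using uniq FT f by blast
    moreover have "\<not> reach (T - {f}) a b" using nab FTf by simp
    ultimately show "F \<in> (\<lambda>f. T - {f}) ` {f \<in> T. \<not> reach (T - {f}) a b}" using f(1) by blast
  qed
next
  have fo: "forest T" using t by (rule tree2_forest)
  show "(\<lambda>f. T - {f}) ` {f \<in> T. \<not> reach (T - {f}) a b} \<subseteq> two_forests V T a b"
  proof
    fix F assume "F \<in> (\<lambda>f. T - {f}) ` {f \<in> T. \<not> reach (T - {f}) a b}"
    then obtain f where f: "f \<in> T" "\<not> reach (T - {f}) a b" "F = T - {f}" by blast
    obtain u v where uv: "f = {u, v}" using tree2_edge[OF t f(1)] by blast
    have "forest F" using forest_mono[OF fo] f(3) by blast
    then have ac: "acyclic_graph F" by (rule forest_imp_acyclic)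
    have F': "F = T - {{u, v}}" using f(3) uv by simp
    have fuv: "{u, v} \<in> T" using f(1) uv by simp
    have cov: "reach F a x \<or> reach F b x" if x: "x \<in> V" for x
    proof -
      have "reach F x u \<or> reach F x v" "reach F a u \<or> reach F a v" "reach F b u \<or> reach F b v"
        using tree_split[OF t fuv x] tree_split[OF t fuv a] tree_split[OF t fuv b] F' by simp_all
      moreover have "\<not> reach F a b" using f(2,3) by simp
      ultimately show ?thesis by (rule reach_cls2)
    qed
    have "F \<subseteq> T" using f(3) by blast
    then show "F \<in> two_forests V T a b" unfolding two_forests_def using f(2,3) ac cov by blast
  qed
qed

lemma gdist_card:
  assumes t: "tree2 V T" and a: "a \<in> V" and b: "b \<in> V"
  shows "gdist T a b = card {f \<in> T. \<not> reach (T - {f}) a b}"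
proof -
  have fo: "forest T" and co: "reach T a b" using t a b unfolding tree2_def by auto
  let ?Q = "\<lambda>n. \<exists>xs. walk T xs \<and> hd xs = a \<and> last xs = b \<and> length xs = Suc n"
  obtain xs where xs: "walk T xs" "hd xs = a" "last xs = b" using co unfolding reach_def by blast
  have "?Q (length xs - 1)" using xs walk_nonempty[OF xs(1)] by (intro exI[of _ xs]) auto
  then have "?Q (gdist T a b)" unfolding gdist_def by (rule LeastI)
  then obtain zs where zs: "walk T zs" "hd zs = a" "last zs = b" "length zs = Suc (gdist T a b)" by blast
  from walk_distinct[OF zs(1)] obtain ys where ys: "walk T ys" "distinct ys" "hd ys = a" "last ys = b"
    "length ys \<le> Suc (gdist T a b)" using zs by auto
  have yne: "ys \<noteq> []" using walk_nonempty[OF ys(1)] .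
  have "?Q (length ys - 1)" using ys yne by (intro exI[of _ ys]) auto
  then have "gdist T a b \<le> length ys - 1" unfolding gdist_def by (rule Least_le)
  then have len: "length ys = Suc (gdist T a b)" using ys(5) yne by (cases ys) auto
  define n where "n = gdist T a b"
  let ?ed = "\<lambda>i. {ys ! i, ys ! Suc i}"
  have hd0: "ys ! 0 = a" using ys(3) yne by (cases ys) auto
  have lastn: "ys ! n = b" using ys(4) yne len by (simp add: last_conv_nth n_def)
  have inj: "inj_on ?ed {..<n}"
  proof (rule inj_onI)
    fix i l assume i: "i \<in> {..<n}" and l: "l \<in> {..<n}" and eq: "?ed i = ?ed l"
    then have "(ys ! i = ys ! l \<and> ys ! Suc i = ys ! Suc l) \<or> (ys ! i = ys ! Suc l \<and> ys ! Suc i = ys ! l)"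
      by (auto simp: doubleton_eq_iff)
    then show "i = l" using ys(2) i l len by (auto simp: nth_eq_iff_index_eq n_def)
  qed
  have img: "{f \<in> T. \<not> reach (T - {f}) a b} = ?ed ` {..<n}"
  proof
    show "{f \<in> T. \<not> reach (T - {f}) a b} \<subseteq> ?ed ` {..<n}"
    proof
      fix f assume f: "f \<in> {f \<in> T. \<not> reach (T - {f}) a b}"
      show "f \<in> ?ed ` {..<n}"
      proof (rule ccontr)
        assume nf: "f \<notin> ?ed ` {..<n}"
        have "walk (T - {f}) ys" unfolding walk_def
        proof (intro conjI allI impI)
          show "ys \<noteq> []" by (rule yne)
          fix i assume "Suc i < length ys"
          then have "i < n" using len n_def by simp
          then show "{ys ! i, ys ! Suc i} \<in> T - {f}" using nf ys(1) \<open>Suc i < length ys\<close>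
            by (auto simp: walk_def)
        qed
        then have "reach (T - {f}) a b" using ys unfolding reach_def by blast
        then show False using f by simp
      qed
    qed
  next
    show "?ed ` {..<n} \<subseteq> {f \<in> T. \<not> reach (T - {f}) a b}"
    proof
      fix f assume "f \<in> ?ed ` {..<n}"
      then obtain i where i: "i < n" "f = ?ed i" by blast
      have fT: "f \<in> T" using ys(1) i len by (simp add: walk_def n_def)
      have neq: "ys ! i \<noteq> ys ! Suc i" using ys(2) i len by (simp add: nth_eq_iff_index_eq n_def)
      have "\<not> reach (T - {f}) a b"
      proof
        assume rab: "reach (T - {f}) a b"
        have w1: "walk (T - {f}) (take (Suc i) ys)" unfolding walk_def
        proof (intro conjI allI impI)
          show "take (Suc i) ys \<noteq> []" using yne by simp
          fix l assume l: "Suc l < length (take (Suc i) ys)"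
          then have li: "l < i" by simp
          have "{ys ! l, ys ! Suc l} \<in> T" using ys(1) li i len by (simp add: walk_def n_def)
          moreover have "{ys ! l, ys ! Suc l} \<noteq> f"
          proof
            assume "{ys ! l, ys ! Suc l} = f"
            then have "ys ! l = ys ! i \<or> ys ! l = ys ! Suc i" using i by (auto simp: doubleton_eq_iff)
            then show False using ys(2) li i len by (auto simp: nth_eq_iff_index_eq n_def)
          qed
          ultimately show "{take (Suc i) ys ! l, take (Suc i) ys ! Suc l} \<in> T - {f}" using li by simp
        qed
        have r1: "reach (T - {f}) a (ys ! i)"
          unfolding reach_def using w1 hd0 yne i len
          by (intro exI[of _ "take (Suc i) ys"]) (auto simp: hd_conv_nth last_conv_nth n_def min_def)
        have w2: "walk (T - {f}) (drop (Suc i) ys)" unfolding walk_def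
        proof (intro conjI allI impI)
          show "drop (Suc i) ys \<noteq> []" using i len by (simp add: n_def)
          fix l assume l: "Suc l < length (drop (Suc i) ys)"
          have "{ys ! (Suc i + l), ys ! Suc (Suc i + l)} \<in> T" using ys(1) l by (simp add: walk_def)
          moreover have "{ys ! (Suc i + l), ys ! Suc (Suc i + l)} \<noteq> f"
          proof
            assume "{ys ! (Suc i + l), ys ! Suc (Suc i + l)} = f"
            then have "ys ! (Suc i + l) = ys ! i \<or> ys ! (Suc (Suc i + l)) = ys ! i" using i by (auto simp: doubleton_eq_iff)
            then show False using ys(2) l by (auto simp: nth_eq_iff_index_eq)
          qed
          ultimately show "{drop (Suc i) ys ! l, drop (Suc i) ys ! Suc l} \<in> T - {f}" using l by simp
        qed
        have r2: "reach (T - {f}) (ys ! Suc i) b"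
          unfolding reach_def using w2 ys(4) i len
          by (intro exI[of _ "drop (Suc i) ys"]) (auto simp: hd_drop_conv_nth n_def)
        have "reach (T - {f}) (ys ! i) (ys ! Suc i)"
          using reach_trans[OF reach_trans[OF reach_sym[OF r1] rab] reach_sym[OF r2]] .
        then show False using forestD[OF fo _ neq] fT i by simp
      qed
      then show "f \<in> {f \<in> T. \<not> reach (T - {f}) a b}" using fT by simp
    qed
  qed
  have "card (?ed ` {..<n}) = n" using card_image[OF inj] by simp
  then show ?thesis unfolding img n_def by simp
qed

lemma card_union_disj:
  fixes n :: nat and A :: "nat \<Rightarrow> 'b set"
  assumes "\<And>i. finite (A i)"
  shows "card (\<Union>i<n. A i) = (\<Sum>i<n. card (A i - (\<Union>l<i. A l)))"
proof (induction n)
  case 0 then show ?case by simp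
next
  case (Suc n)
  let ?X = "\<Union>i<n. A i"
  have fX: "finite ?X" using assms by simp
  have "(\<Union>i<Suc n. A i) = ?X \<union> (A n - ?X)" by (auto simp: lessThan_Suc)
  moreover have "card (?X \<union> (A n - ?X)) = card ?X + card (A n - ?X)"
    by (rule card_Un_disjoint) (use fX assms in auto)
  ultimately show ?case using Suc by simp
qed

lemma count1:
  assumes "j < c" "k < c" "j \<le> k"
  shows "card {l. l < c - 1 \<and> (l < j \<and> j \<le> c - 1) \<noteq> (l < k \<and> k \<le> c - 1)} = k - j"
proof -
  have "{l. l < c - 1 \<and> (l < j \<and> j \<le> c - 1) \<noteq> (l < k \<and> k \<le> c - 1)} = {j..<k}"
    using assms by auto
  then show ?thesis by simp
qed

lemma count2:
  assumes "j < c" "k < c" "j \<le> k"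
  shows "card {(i, l). i < l \<and> l < c \<and> (i < j \<and> j \<le> l) \<noteq> (i < k \<and> k \<le> l)} = (k - j) * (c - (k - j))"
proof -
  have eq: "{(i, l). i < l \<and> l < c \<and> (i < j \<and> j \<le> l) \<noteq> (i < k \<and> k \<le> l)}
        = ({..<j} \<times> {j..<k}) \<union> ({j..<k} \<times> {k..<c})"
    using assms by auto
  have "card (({..<j} \<times> {j..<k}) \<union> ({j..<k} \<times> {k..<c})) = card ({..<j} \<times> {j..<k}) + card ({j..<k} \<times> {k..<c})"
    by (rule card_Un_disjoint) auto
  also have "\<dots> = j * (k - j) + (k - j) * (c - k)" by (simp add: card_cartesian_product)
  also have "\<dots> = (k - j) * (c - (k - j))"
  proof -
    have "c - (k - j) = j + (c - k)" using assms by simp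
    then show ?thesis by (simp add: algebra_simps)
  qed
  finally show ?thesis using eq by simp
qed

locale cyc =
  fixes V :: "'a set" and E :: "'a set set" and vs :: "'a list"
  assumes tree: "is_tree V E"
    and pw: "walk E vs" and dv: "distinct vs"
    and hV: "hd vs \<in> V" and lV: "last vs \<in> V" and hl: "hd vs \<noteq> last vs"
    and ng: "{hd vs, last vs} \<notin> E"
begin

abbreviation c where "c \<equiv> length vs"

definition ce :: "nat \<Rightarrow> 'a set" where
  "ce m = (if Suc m < c then {vs ! m, vs ! Suc m} else {vs ! 0, vs ! (c - 1)})"

definition Ep where "Ep = insert {hd vs, last vs} E"
definition P where "P = ce ` {..<c - 1}"
definition Cy where "Cy = ce ` {..<c}"
definition E0 where "E0 = E - P"

lemma vne: "vs \<noteq> []" using pw walk_nonempty by blast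

lemma hd0: "hd vs = vs ! 0" using vne by (cases vs) auto

lemma last1: "last vs = vs ! (c - 1)" using vne by (simp add: last_conv_nth)

lemma graphE: "graph V E" using tree unfolding is_tree_def by blast

lemma edgeE: "e \<in> E \<Longrightarrow> \<exists>x y. x \<in> V \<and> y \<in> V \<and> x \<noteq> y \<and> e = {x, y}"
  using graphE unfolding graph_def by blast

lemma finV: "finite V" using graphE unfolding graph_def by blast

lemma forestE: "forest E"
  using tree acyclic_imp_forest unfolding is_tree_def by blast

lemma connE: "x \<in> V \<Longrightarrow> y \<in> V \<Longrightarrow> reach E x y"
  using tree unfolding is_tree_def connected_graph_def by blast

lemma tree2E: "tree2 V E"
  unfolding tree2_def using edgeE forestE connE by blast

lemma c3: "c \<ge> 3"
proof (rule ccontr)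
  assume "\<not> 3 \<le> c"
  moreover have "c \<noteq> 0" using vne by simp
  ultimately have "c = 1 \<or> c = 2" by linarith
  then show False
  proof
    assume "c = 1" then show False using hl hd0 last1 by simp
  next
    assume c2: "c = 2"
    have "{vs ! 0, vs ! Suc 0} \<in> E" using pw c2 by (simp add: walk_def)
    then show False using ng hd0 last1 c2 by simp
  qed
qed

lemma pw_edge: "Suc i < c \<Longrightarrow> {vs ! i, vs ! Suc i} \<in> E"
  using pw by (simp add: walk_def)

lemma vV: "i < c \<Longrightarrow> vs ! i \<in> V"
proof (cases "Suc i < c")
  case True
  then show ?thesis using edge_in_V(1)[OF edgeE[OF pw_edge[OF True]]] by blast
next
  case False
  assume "i < c"
  then have "i = c - 1" using False by simp
  then show ?thesis using lV last1 by simp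
qed

lemma v_inj: "i < c \<Longrightarrow> j < c \<Longrightarrow> vs ! i = vs ! j \<longleftrightarrow> i = j"
  using dv by (simp add: nth_eq_iff_index_eq)

lemma ce_last: "ce (c - 1) = {hd vs, last vs}"
proof -
  have "\<not> Suc (c - 1) < c" using c3 by simp
  then show ?thesis using hd0 last1 by (simp add: ce_def del: One_nat_def)
qed

lemma c_pos: "0 < c" using vne by simp

lemma ce_path: "Suc m < c \<Longrightarrow> ce m = {vs ! m, vs ! Suc m}"
  by (simp add: ce_def)

lemma ce_E: "Suc m < c \<Longrightarrow> ce m \<in> E"
  using ce_path pw_edge by simp

lemma g_notin: "{hd vs, last vs} \<notin> E" using ng .

lemma ce_inj:
  assumes m: "m < c" and m': "m' < c"
  shows "ce m = ce m' \<longleftrightarrow> m = m'"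
proof
  assume eq: "ce m = ce m'"
  have cl: "c - 1 < c" using c3 by simp
  show "m = m'"
  proof (cases "Suc m < c")
    case T1: True
    show ?thesis
    proof (cases "Suc m' < c")
      case True
      then have "{vs ! m, vs ! Suc m} = {vs ! m', vs ! Suc m'}" using eq T1 by (simp add: ce_def)
      then have "(vs ! m = vs ! m' \<and> vs ! Suc m = vs ! Suc m') \<or> (vs ! m = vs ! Suc m' \<and> vs ! Suc m = vs ! m')"
        by (simp add: doubleton_eq_iff)
      then have "m = m' \<or> (m = Suc m' \<and> Suc m = m')"
        using v_inj[OF m m'] v_inj[OF m True] v_inj[OF T1 m'] by blast
      then show ?thesis by linarith
    next
      case False
      then have "{vs ! m, vs ! Suc m} = {vs ! 0, vs ! (c - 1)}" using eq T1 by (simp add: ce_def)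
      then have "(vs ! m = vs ! 0 \<and> vs ! Suc m = vs ! (c - 1)) \<or> (vs ! m = vs ! (c - 1) \<and> vs ! Suc m = vs ! 0)"
        by (simp add: doubleton_eq_iff)
      then have "(m = 0 \<and> Suc m = c - 1) \<or> m = c - 1"
        using v_inj[OF m c_pos] v_inj[OF T1 cl] v_inj[OF m cl] by blast
      then show ?thesis using T1 c3 by linarith
    qed
  next
    case F1: False
    show ?thesis
    proof (cases "Suc m' < c")
      case True
      then have "{vs ! m', vs ! Suc m'} = {vs ! 0, vs ! (c - 1)}" using eq F1 by (simp add: ce_def)
      then have "(vs ! m' = vs ! 0 \<and> vs ! Suc m' = vs ! (c - 1)) \<or> (vs ! m' = vs ! (c - 1) \<and> vs ! Suc m' = vs ! 0)"
        by (simp add: doubleton_eq_iff)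
      then have "(m' = 0 \<and> Suc m' = c - 1) \<or> m' = c - 1"
        using v_inj[OF m' c_pos] v_inj[OF True cl] v_inj[OF m' cl] by blast
      then show ?thesis using True c3 by linarith
    next
      case False
      then show ?thesis using F1 m m' by simp
    qed
  qed
qed simp

lemma ce_inj_on: "inj_on ce {..<c}"
  using ce_inj by (auto intro: inj_onI)

lemma ce_verts: "m < c \<Longrightarrow> \<exists>p q. p < c \<and> q < c \<and> ce m = {vs ! p, vs ! q}"
proof (cases "Suc m < c")
  case True
  then show ?thesis unfolding ce_def by (intro exI[of _ m] exI[of _ "Suc m"]) simp
next
  case False
  then show ?thesis unfolding ce_def using c3 c_pos by (intro exI[of _ 0] exI[of _ "c - 1"]) simp
qed

lemma P_E: "P \<subseteq> E"
  unfolding P_def using ce_E c3 by auto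

lemma Cy_eq: "Cy = insert {hd vs, last vs} P"
proof -
  have "{..<c} = insert (c - 1) {..<c - 1}" using c3 by auto
  then show ?thesis unfolding Cy_def P_def using ce_last by simp
qed

lemma E_eq: "E = E0 \<union> P" unfolding E0_def using P_E by blast

lemma Ep_eq: "Ep = E0 \<union> Cy" unfolding Ep_def Cy_eq using E_eq by blast

lemma E0_Cy: "E0 \<inter> Cy = {}" unfolding E0_def Cy_eq using g_notin by blast

lemma E0_E: "E0 \<subseteq> E" unfolding E0_def by blast

lemma P_eq: "P = Cy - {ce (c - 1)}"
proof -
  have "ce (c - 1) \<notin> P" using P_E g_notin unfolding ce_last by blast
  then show ?thesis unfolding Cy_eq ce_last by blast
qed

lemma finE: "finite E"
proof -
  have "E \<subseteq> Pow V" using edgeE by blast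
  then show ?thesis using finV finite_subset by blast
qed

lemma finEp: "finite Ep" unfolding Ep_def using finE by simp

lemma seg: "a \<le> b \<Longrightarrow> b < c \<Longrightarrow> reach (ce ` {a..<b}) (vs ! a) (vs ! b)"
proof (induction b)
  case 0 then show ?case by simp
next
  case (Suc b)
  show ?case
  proof (cases "a = Suc b")
    case True then show ?thesis by simp
  next
    case False
    then have ab: "a \<le> b" using Suc.prems by simp
    have r1: "reach (ce ` {a..<b}) (vs ! a) (vs ! b)" using Suc ab by simp
    have "ce ` {a..<b} \<subseteq> ce ` {a..<Suc b}" by auto
    then have r1': "reach (ce ` {a..<Suc b}) (vs ! a) (vs ! b)" using reach_mono[OF r1] by blast
    have "ce b = {vs ! b, vs ! Suc b}" using Suc.prems by (simp add: ce_def)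
    moreover have "ce b \<in> ce ` {a..<Suc b}" using ab by simp
    ultimately have "reach (ce ` {a..<Suc b}) (vs ! b) (vs ! Suc b)" using reach_edge by metis
    then show ?thesis using reach_trans[OF r1'] by blast
  qed
qed

lemma seg_in: "a \<le> b \<Longrightarrow> b < c \<Longrightarrow> (\<And>m. a \<le> m \<Longrightarrow> m < b \<Longrightarrow> ce m \<in> S) \<Longrightarrow> reach S (vs ! a) (vs ! b)"
proof -
  assume ab: "a \<le> b" "b < c" and h: "\<And>m. a \<le> m \<Longrightarrow> m < b \<Longrightarrow> ce m \<in> S"
  have "ce ` {a..<b} \<subseteq> S" using h by auto
  then show ?thesis using reach_mono[OF seg[OF ab]] by blast
qed

end

context cyc begin

lemma reach_some_v: "m \<le> c - 1 \<Longrightarrow> x \<in> V \<Longrightarrow> \<exists>j<c. reach (E - ce ` {..<m}) x (vs ! j)"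
proof (induction m)
  case 0
  have "reach E x (vs ! 0)" using connE[OF 0(2) vV[OF c_pos]] .
  then show ?case using c_pos by auto
next
  case (Suc m)
  then obtain j where j: "j < c" "reach (E - ce ` {..<m}) x (vs ! j)" by auto
  let ?H = "E - ce ` {..<Suc m}"
  have sm: "Suc m < c" using Suc.prems c3 by simp
  have cem: "ce m = {vs ! m, vs ! Suc m}" using ce_path[OF sm] .
  have "ce ` {..<Suc m} = insert (ce m) (ce ` {..<m})" by (simp add: lessThan_Suc)
  then have "E - ce ` {..<m} \<subseteq> insert (ce m) ?H" by blast
  then have "reach (insert {vs ! m, vs ! Suc m} ?H) x (vs ! j)" using reach_mono[OF j(2)] cem by simp
  from reach_insert[OF this]
  have "reach ?H x (vs ! j) \<or> reach ?H x (vs ! m) \<or> reach ?H x (vs ! Suc m)" by blast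
  moreover have "m < c" using sm by simp
  ultimately show ?case using j(1) sm by blast
qed

lemma E0_alt: "E0 = E - ce ` {..<c - 1}" unfolding E0_def P_def ..

lemma ex_idx: "x \<in> V \<Longrightarrow> \<exists>j<c. reach E0 x (vs ! j)"
  using reach_some_v[of "c - 1" x] unfolding E0_alt by simp

lemma v_sep:
  assumes jl: "j < l" "l < c" shows "\<not> reach E0 (vs ! j) (vs ! l)"
proof
  assume r: "reach E0 (vs ! j) (vs ! l)"
  have sj: "Suc j < c" using jl by simp
  let ?H = "E - {ce j}"
  have "ce j \<in> P" unfolding P_def using jl by auto
  then have "E0 \<subseteq> ?H" unfolding E0_def by blast
  then have r1: "reach ?H (vs ! j) (vs ! l)" using reach_mono[OF r] by blast
  have r2: "reach ?H (vs ! Suc j) (vs ! l)"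
  proof (rule seg_in)
    fix m assume m: "Suc j \<le> m" "m < l"
    then have "ce m \<in> E" using ce_E jl by simp
    moreover have "ce m \<noteq> ce j" using ce_inj[of m j] m jl by simp
    ultimately show "ce m \<in> ?H" by blast
  qed (use jl in auto)
  have "reach ?H (vs ! j) (vs ! Suc j)" using reach_trans[OF r1 reach_sym[OF r2]] .
  moreover have "vs ! j \<noteq> vs ! Suc j" using v_inj[of j "Suc j"] sj by simp
  moreover have "{vs ! j, vs ! Suc j} \<in> E" using pw_edge[OF sj] .
  ultimately show False using forestD[OF forestE] ce_path[OF sj] by metis
qed

lemma idx_unique:
  assumes "j < c" "l < c" "reach E0 x (vs ! j)" "reach E0 x (vs ! l)" shows "j = l"
proof (rule ccontr)
  assume ne: "j \<noteq> l"
  have "reach E0 (vs ! j) (vs ! l)" using reach_trans[OF reach_sym[OF assms(3)] assms(4)] .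
  then show False using v_sep[of j l] v_sep[of l j] reach_sym[of E0 "vs ! j" "vs ! l"] ne assms(1,2)
    by (cases "j < l") auto
qed

definition idx :: "'a \<Rightarrow> nat" where "idx x = (THE j. j < c \<and> reach E0 x (vs ! j))"

lemma idx_prop: assumes "x \<in> V" shows "idx x < c" "reach E0 x (vs ! idx x)"
proof -
  have "\<exists>!j. j < c \<and> reach E0 x (vs ! j)" using ex_idx[OF assms] idx_unique by blast
  then have "idx x < c \<and> reach E0 x (vs ! idx x)" unfolding idx_def by (rule theI')
  then show "idx x < c" "reach E0 x (vs ! idx x)" by auto
qed

lemma idx_eq: assumes "x \<in> V" "j < c" "reach E0 x (vs ! j)" shows "idx x = j"
  using idx_unique[OF idx_prop(1)[OF assms(1)] assms(2) idx_prop(2)[OF assms(1)] assms(3)] .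

lemma idx_v: "j < c \<Longrightarrow> idx (vs ! j) = j"
  using idx_eq[OF vV] by simp

lemma subtree_eq:
  assumes j: "j < c" shows "subtree V E vs j = {x \<in> V. reach E0 x (vs ! j)}"
proof -
  define rem where "rem = {{vs ! i, vs ! Suc i} | i. Suc i < length vs \<and> (i = j \<or> Suc i = j)}"
  have st: "subtree V E vs j = {x \<in> V. reach (E - rem) (vs ! j) x}"
    unfolding subtree_def comp_def rem_def ..
  have rem_ce: "rem = ce ` {i. Suc i < c \<and> (i = j \<or> Suc i = j)}"
    unfolding rem_def using ce_path by auto
  have remP: "rem \<subseteq> P" unfolding rem_ce P_def by auto
  have E0rem: "E0 \<subseteq> E - rem" unfolding E0_def using remP by blast
  have notrem: "ce m \<in> E - rem" if "Suc m < c" "m \<noteq> j" "Suc m \<noteq> j" for m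
  proof -
    have "ce m \<noteq> ce i" if "Suc i < c" "i = j \<or> Suc i = j" for i
      using ce_inj[of m i] that \<open>Suc m < c\<close> \<open>m \<noteq> j\<close> \<open>Suc m \<noteq> j\<close> by auto
    then show ?thesis unfolding rem_ce using ce_E[OF \<open>Suc m < c\<close>] by blast
  qed
  show ?thesis unfolding st
  proof (intro Collect_cong conj_cong refl iffI)
    fix x assume xV: "x \<in> V" and r: "reach (E - rem) (vs ! j) x"
    let ?l = "idx x"
    have l: "?l < c" and rl: "reach E0 x (vs ! ?l)" using idx_prop[OF xV] by auto
    have r2: "reach (E - rem) (vs ! j) (vs ! ?l)" using reach_trans[OF r reach_mono[OF rl E0rem]] .
    show "reach E0 x (vs ! j)"
    proof (cases "?l = j")
      case True then show ?thesis using rl by simp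
    next
      case False
      show ?thesis
      proof (cases "j < ?l")
        case True
        have sj: "Suc j < c" using True l by simp
        have r3: "reach (E - rem) (vs ! Suc j) (vs ! ?l)"
          by (rule seg_in) (use True l notrem in auto)
        have "reach (E - rem) (vs ! j) (vs ! Suc j)" using reach_trans[OF r2 reach_sym[OF r3]] .
        moreover have "ce j \<in> rem" unfolding rem_ce using sj by auto
        ultimately have "reach (E - {ce j}) (vs ! j) (vs ! Suc j)"
          using reach_mono[of "E - rem" "vs ! j" "vs ! Suc j" "E - {ce j}"] by blast
        moreover have "vs ! j \<noteq> vs ! Suc j" using v_inj[of j "Suc j"] sj by simp
        ultimately show ?thesis using forestD[OF forestE pw_edge[OF sj]] ce_path[OF sj] by simp
      next
        case False
        then have lj: "?l < j" using \<open>?l \<noteq> j\<close> by simp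
        define j' where "j' = j - 1"
        have jj: "j = Suc j'" using lj unfolding j'_def by simp
        have r3: "reach (E - rem) (vs ! ?l) (vs ! j')"
          by (rule seg_in) (use lj j jj notrem in auto)
        have "reach (E - rem) (vs ! j') (vs ! j)" using reach_sym[OF reach_trans[OF r2 r3]] .
        moreover have "ce j' \<in> rem" unfolding rem_ce using j jj by auto
        ultimately have "reach (E - {ce j'}) (vs ! j') (vs ! Suc j')"
          using reach_mono[of "E - rem" "vs ! j'" "vs ! j" "E - {ce j'}"] jj by blast
        moreover have "vs ! j' \<noteq> vs ! Suc j'" using v_inj[of j' "Suc j'"] j jj by simp
        moreover have sj: "Suc j' < c" using j jj by simp
        ultimately show ?thesis using forestD[OF forestE pw_edge[OF sj]] ce_path[OF sj] by simp
      qed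
    qed
  next
    fix x assume "x \<in> V" and r: "reach E0 x (vs ! j)"
    show "reach (E - rem) (vs ! j) x" using reach_mono[OF reach_sym[OF r] E0rem] .
  qed
qed

end

context cyc begin

lemma ce_Cy: "m < c \<Longrightarrow> ce m \<in> Cy" unfolding Cy_def by simp

lemma ce_in_minus: "m < c \<Longrightarrow> (\<And>k. k \<in> K \<Longrightarrow> k < c \<and> k \<noteq> m) \<Longrightarrow> ce m \<in> Cy - ce ` K"
proof -
  assume m: "m < c" and h: "\<And>k. k \<in> K \<Longrightarrow> k < c \<and> k \<noteq> m"
  have "ce m \<noteq> ce k" if "k \<in> K" for k using h[OF that] ce_inj[of m k] m by auto
  then show ?thesis using ce_Cy[OF m] by blast
qed

lemma g_edge: "{vs ! 0, vs ! (c - 1)} = ce (c - 1)" using ce_last hd0 last1 by simp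

lemma cyc_minus1:
  assumes i: "i < c" and p: "p < c" shows "reach (Cy - {ce i}) (vs ! p) (vs ! 0)"
proof -
  have mem: "ce m \<in> Cy - {ce i}" if "m < c" "m \<noteq> i" for m
  proof -
    have "ce m \<noteq> ce i" using ce_inj[of m i] that i by auto
    then show ?thesis using ce_Cy[OF that(1)] by blast
  qed
  show ?thesis
  proof (cases "p \<le> i")
    case True
    have "reach (Cy - {ce i}) (vs ! 0) (vs ! p)"
      by (rule seg_in) (use True p mem in auto)
    then show ?thesis by (rule reach_sym)
  next
    case False
    have r1: "reach (Cy - {ce i}) (vs ! p) (vs ! (c - 1))"
      by (rule seg_in) (use False p mem in auto)
    have "ce (c - 1) \<in> Cy - {ce i}" using mem[of "c - 1"] False p by simp
    then have "reach (Cy - {ce i}) (vs ! (c - 1)) (vs ! 0)"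
      using reach_edge[of "vs ! (c - 1)" "vs ! 0"] g_edge by (simp add: insert_commute)
    then show ?thesis using reach_trans[OF r1] by blast
  qed
qed

definition side :: "nat \<Rightarrow> nat \<Rightarrow> nat \<Rightarrow> bool" where "side i l t \<longleftrightarrow> i < t \<and> t \<le> l"

lemma cyc_minus2:
  assumes il: "i < l" "l < c" and p: "p < c" and q: "q < c" and sd: "side i l p = side i l q"
  shows "reach (Cy - {ce i, ce l}) (vs ! p) (vs ! q)"
proof -
  let ?S = "Cy - {ce i, ce l}"
  have mem: "ce m \<in> ?S" if "m < c" "m \<noteq> i" "m \<noteq> l" for m
  proof -
    have "ce m \<noteq> ce i" "ce m \<noteq> ce l" using ce_inj[of m i] ce_inj[of m l] that il by auto
    then show ?thesis using ce_Cy[OF that(1)] by blast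
  qed
  have inl: "reach ?S (vs ! t) (vs ! l)" if "side i l t" "t < c" for t
    by (rule seg_in) (use that il mem in \<open>auto simp: side_def\<close>)
  have out0: "reach ?S (vs ! t) (vs ! 0)" if "\<not> side i l t" "t < c" for t
  proof (cases "t \<le> i")
    case True
    have "reach ?S (vs ! 0) (vs ! t)"
      by (rule seg_in) (use True il mem in auto)
    then show ?thesis by (rule reach_sym)
  next
    case False
    then have tl: "l < t" using that unfolding side_def by simp
    have r1: "reach ?S (vs ! t) (vs ! (c - 1))"
      by (rule seg_in) (use tl il \<open>t < c\<close> mem in auto)
    have "ce (c - 1) \<in> ?S" using mem[of "c - 1"] tl il \<open>t < c\<close> by simp
    then have "reach ?S (vs ! (c - 1)) (vs ! 0)"
      using reach_edge[of "vs ! (c - 1)" "vs ! 0"] g_edge by (simp add: insert_commute)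
    then show ?thesis using reach_trans[OF r1] by blast
  qed
  show ?thesis
  proof (cases "side i l p")
    case True
    then have "side i l q" using sd by simp
    then show ?thesis using reach_trans[OF inl[OF True p] reach_sym[OF inl[OF _ q]]] by blast
  next
    case False
    then have "\<not> side i l q" using sd by simp
    then show ?thesis using reach_trans[OF out0[OF False p] reach_sym[OF out0[OF _ q]]] by blast
  qed
qed

lemma E0_V: "{u, w} \<in> E0 \<Longrightarrow> u \<in> V \<and> w \<in> V"
  using edge_in_V[OF edgeE, of u w] E0_E by blast

lemma side_preserved:
  assumes il: "i < l" "l < c" and r: "reach (Ep - {ce i, ce l}) x y" and x: "x \<in> V" and y: "y \<in> V"
  shows "side i l (idx x) = side i l (idx y)"
proof -
  let ?Q = "\<lambda>u w. u = w \<or> (u \<in> V \<and> w \<in> V \<and> side i l (idx u) = side i l (idx w))"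
  have "?Q x y" using r
  proof (rule reach_induct_P)
    fix u v w assume "?Q u v" "?Q v w" then show "?Q u w" by auto
  next
    fix u w assume e: "{u, w} \<in> Ep - {ce i, ce l}"
    then have "{u, w} \<in> E0 \<or> {u, w} \<in> Cy" unfolding Ep_eq by blast
    then show "?Q u w"
    proof
      assume e0: "{u, w} \<in> E0"
      have uV: "u \<in> V" and wV: "w \<in> V" using E0_V[OF e0] by auto
      have "reach E0 w (vs ! idx u)"
        using reach_trans[OF reach_sym[OF reach_edge[OF e0]] idx_prop(2)[OF uV]] .
      then have "idx w = idx u" using idx_eq[OF wV idx_prop(1)[OF uV]] by simp
      then show "?Q u w" using uV wV by simp
    next
      assume "{u, w} \<in> Cy"
      then obtain m where m: "m < c" "{u, w} = ce m" unfolding Cy_def by auto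
      have mi: "m \<noteq> i" "m \<noteq> l" using e m by auto
      show "?Q u w"
      proof (cases "Suc m < c")
        case True
        have "{u, w} = {vs ! m, vs ! Suc m}" using m ce_path[OF True] by simp
        then have uw: "(u = vs ! m \<and> w = vs ! Suc m) \<or> (u = vs ! Suc m \<and> w = vs ! m)"
          by (simp add: doubleton_eq_iff)
        have "side i l m = side i l (Suc m)" using mi unfolding side_def by auto
        then show ?thesis using uw idx_v[OF m(1)] idx_v[OF True] vV[OF m(1)] vV[OF True] by auto
      next
        case False
        then have mc: "m = c - 1" using m by simp
        have "{u, w} = {vs ! 0, vs ! (c - 1)}" using m mc g_edge by simp
        then have uw: "(u = vs ! 0 \<and> w = vs ! (c - 1)) \<or> (u = vs ! (c - 1) \<and> w = vs ! 0)"
          by (simp add: doubleton_eq_iff)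
        have cl: "c - 1 < c" using c_pos by simp
        have "side i l 0 = side i l (c - 1)" using mi mc il unfolding side_def by auto
        then show ?thesis using uw idx_v[OF c_pos] idx_v[OF cl] vV[OF c_pos] vV[OF cl] by auto
      qed
    qed
  qed simp
  then show ?thesis by auto
qed

lemma E0_sub: "i < c \<Longrightarrow> l < c \<Longrightarrow> E0 \<subseteq> Ep - {ce i, ce l}"
  using ce_Cy E0_Cy unfolding Ep_eq by blast

lemma arc:
  assumes il: "i < l" "l < c" and a: "a \<in> V" and b: "b \<in> V"
  shows "reach (Ep - {ce i, ce l}) a b \<longleftrightarrow> side i l (idx a) = side i l (idx b)"
proof
  assume "reach (Ep - {ce i, ce l}) a b"
  then show "side i l (idx a) = side i l (idx b)" using side_preserved il a b by blast
next
  assume sd: "side i l (idx a) = side i l (idx b)"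
  have sub: "E0 \<subseteq> Ep - {ce i, ce l}" using E0_sub il by simp
  have sub2: "Cy - {ce i, ce l} \<subseteq> Ep - {ce i, ce l}" unfolding Ep_eq by blast
  have r1: "reach (Ep - {ce i, ce l}) a (vs ! idx a)" using reach_mono[OF idx_prop(2)[OF a] sub] .
  have r2: "reach (Ep - {ce i, ce l}) b (vs ! idx b)" using reach_mono[OF idx_prop(2)[OF b] sub] .
  have r3: "reach (Ep - {ce i, ce l}) (vs ! idx a) (vs ! idx b)"
    using reach_mono[OF cyc_minus2[OF il idx_prop(1)[OF a] idx_prop(1)[OF b] sd] sub2] .
  show "reach (Ep - {ce i, ce l}) a b" using reach_trans[OF reach_trans[OF r1 r3] reach_sym[OF r2]] .
qed

end

context cyc begin

definition Tt :: "nat \<Rightarrow> 'a set set" where "Tt i = Ep - {ce i}"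

lemma Ep_edge: "e \<in> Ep \<Longrightarrow> \<exists>x y. x \<in> V \<and> y \<in> V \<and> x \<noteq> y \<and> e = {x, y}"
  unfolding Ep_def using edgeE hV lV hl by blast

lemma Tt_tree: assumes i: "i < c" shows "tree2 V (Tt i)"
  unfolding tree2_def
proof (intro conjI ballI)
  fix e assume "e \<in> Tt i"
  then have "e \<in> Ep" unfolding Tt_def by simp
  then show "\<exists>x y. x \<in> V \<and> y \<in> V \<and> x \<noteq> y \<and> e = {x, y}" by (rule Ep_edge)
next
  show "forest (Tt i)"
  proof (cases "i = c - 1")
    case True
    have "Tt i = insert {hd vs, last vs} E - {{hd vs, last vs}}" unfolding Tt_def Ep_def True ce_last ..
    also have "\<dots> = E" using g_notin by (rule Diff_insert_absorb)
    finally show ?thesis using forestE by simp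
  next
    case False
    then have ic: "i < c - 1" using i by simp
    have cei: "ce i \<in> E" using ce_E ic by simp
    have gne: "{hd vs, last vs} \<noteq> ce i" using cei g_notin by metis
    have eq: "Tt i = insert {hd vs, last vs} (E - {ce i})" unfolding Tt_def Ep_def using gne by auto
    have eq2: "E - {ce i} = Ep - {ce i, ce (c - 1)}" unfolding Ep_def ce_last using g_notin by auto
    have cl: "c - 1 < c" using c_pos by simp
    have nr: "\<not> reach (E - {ce i}) (hd vs) (last vs)"
    proof
      assume "reach (E - {ce i}) (hd vs) (last vs)"
      then have "reach (Ep - {ce i, ce (c - 1)}) (vs ! 0) (vs ! (c - 1))" using eq2 hd0 last1 by simp
      from side_preserved[OF ic cl this vV[OF c_pos] vV[OF cl]]
      have "side i (c - 1) (idx (vs ! 0)) = side i (c - 1) (idx (vs ! (c - 1)))" .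
      then show False using idx_v[OF c_pos] idx_v[OF cl] ic unfolding side_def by simp
    qed
    have "forest (E - {ce i})" using forest_mono[OF forestE Diff_subset] .
    from forest_insert[OF this hl nr] show ?thesis unfolding eq .
  qed
next
  have to0: "reach (Tt i) x (vs ! 0)" if x: "x \<in> V" for x
  proof -
    have s1: "E0 \<subseteq> Tt i" unfolding Tt_def using E0_sub[OF i i] by simp
    have s2: "Cy - {ce i} \<subseteq> Tt i" unfolding Tt_def Ep_eq by blast
    have r1: "reach (Tt i) x (vs ! idx x)" using reach_mono[OF idx_prop(2)[OF x] s1] .
    have r2: "reach (Tt i) (vs ! idx x) (vs ! 0)" using reach_mono[OF cyc_minus1[OF i idx_prop(1)[OF x]] s2] .
    show ?thesis using reach_trans[OF r1 r2] .
  qed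
  fix x y assume "x \<in> V" "y \<in> V"
  then show "reach (Tt i) x y" using reach_trans[OF to0 reach_sym[OF to0]] by blast
qed

lemma cy_swap:
  assumes i: "i < c" and i': "i' < c" and r: "reach ((E0 - {f}) \<union> (Cy - {ce i})) x y"
  shows "reach ((E0 - {f}) \<union> (Cy - {ce i'})) x y"
  using r
proof (rule reach_subst)
  fix u w assume e: "{u, w} \<in> (E0 - {f}) \<union> (Cy - {ce i})"
  let ?G = "(E0 - {f}) \<union> (Cy - {ce i'})"
  show "reach ?G u w"
  proof (cases "{u, w} \<in> E0 - {f}")
    case True then show ?thesis using reach_edge[of u w ?G] by blast
  next
    case False
    then have "{u, w} \<in> Cy" using e by blast
    then obtain m where m: "m < c" "{u, w} = ce m" unfolding Cy_def by auto
    then obtain p q where pq: "p < c" "q < c" "{u, w} = {vs ! p, vs ! q}" using ce_verts by metis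
    have sub: "Cy - {ce i'} \<subseteq> ?G" by blast
    have "reach ?G (vs ! p) (vs ! q)"
      using reach_trans[OF reach_mono[OF cyc_minus1[OF i' pq(1)] sub]
          reach_sym[OF reach_mono[OF cyc_minus1[OF i' pq(2)] sub]]] .
    moreover have "(u = vs ! p \<and> w = vs ! q) \<or> (u = vs ! q \<and> w = vs ! p)" using pq(3) by (simp add: doubleton_eq_iff)
    ultimately show ?thesis using reach_sym[of ?G "vs ! p" "vs ! q"] by blast
  qed
qed

lemma off:
  assumes f: "f \<in> E0" and i: "i < c"
  shows "reach (Ep - {ce i, f}) a b \<longleftrightarrow> reach (E - {f}) a b"
proof -
  have cl: "c - 1 < c" using c_pos by simp
  have fC: "f \<notin> Cy" using f E0_Cy by blast
  have cE: "ce i \<notin> E0" using ce_Cy[OF i] E0_Cy by blast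
  have e1: "Ep - {ce i, f} = (E0 - {f}) \<union> (Cy - {ce i})"
    unfolding Ep_eq using fC cE by blast
  have e2: "E - {f} = (E0 - {f}) \<union> (Cy - {ce (c - 1)})"
    using E_eq P_eq fC by blast
  show ?thesis unfolding e1 e2 using cy_swap[OF i cl, of f a b] cy_swap[OF cl i, of f a b] by blast
qed

lemma union_eq: "two_forests V Ep a b = (\<Union>i<c. two_forests V (Tt i) a b)"
proof
  show "(\<Union>i<c. two_forests V (Tt i) a b) \<subseteq> two_forests V Ep a b"
    unfolding two_forests_def Tt_def by blast
next
  show "two_forests V Ep a b \<subseteq> (\<Union>i<c. two_forests V (Tt i) a b)"
  proof
    fix F assume F: "F \<in> two_forests V Ep a b"
    then have FE: "F \<subseteq> Ep" and ac: "acyclic_graph F" unfolding two_forests_def by auto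
    have fo: "forest F" using acyclic_imp_forest[OF ac] .
    have "\<exists>i<c. ce i \<notin> F"
    proof (rule ccontr)
      assume "\<not> (\<exists>i<c. ce i \<notin> F)"
      then have all: "\<And>i. i < c \<Longrightarrow> ce i \<in> F" by blast
      have cl: "c - 1 < c" using c_pos by simp
      have "reach (F - {ce (c - 1)}) (vs ! 0) (vs ! (c - 1))"
      proof (rule seg_in)
        fix m assume "0 \<le> m" "m < c - 1"
        then show "ce m \<in> F - {ce (c - 1)}" using all[of m] ce_inj[of m "c - 1"] cl by auto
      qed (use cl in auto)
      moreover have "vs ! 0 \<noteq> vs ! (c - 1)" using v_inj[OF c_pos cl] c3 by simp
      moreover have "{vs ! 0, vs ! (c - 1)} \<in> F" using all[OF cl] g_edge by simp
      ultimately show False using forestD[OF fo] g_edge by metis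
    qed
    then obtain i where i: "i < c" "ce i \<notin> F" by blast
    then have "F \<subseteq> Tt i" using FE unfolding Tt_def by blast
    then have "F \<in> two_forests V (Tt i) a b" using F unfolding two_forests_def by blast
    then show "F \<in> (\<Union>i<c. two_forests V (Tt i) a b)" using i by blast
  qed
qed

definition Sset :: "'a \<Rightarrow> 'a \<Rightarrow> nat \<Rightarrow> 'a set set" where
  "Sset a b i = {f \<in> Tt i. \<not> reach (Tt i - {f}) a b}"

lemma term_eq:
  assumes i: "i < c" and a: "a \<in> V" and b: "b \<in> V"
  shows "two_forests V (Tt i) a b - (\<Union>l<i. two_forests V (Tt l) a b) = (\<lambda>f. Tt i - {f}) ` (Sset a b i - ce ` {..<i})"
proof
  show "two_forests V (Tt i) a b - (\<Union>l<i. two_forests V (Tt l) a b) \<subseteq> (\<lambda>f. Tt i - {f}) ` (Sset a b i - ce ` {..<i})"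
  proof
    fix F assume F: "F \<in> two_forests V (Tt i) a b - (\<Union>l<i. two_forests V (Tt l) a b)"
    then obtain f where f: "f \<in> Sset a b i" "F = Tt i - {f}" using GL[OF Tt_tree[OF i] a b] unfolding Sset_def by blast
    have "f \<notin> ce ` {..<i}"
    proof
      assume "f \<in> ce ` {..<i}"
      then obtain l where l: "l < i" "f = ce l" by blast
      have "F \<subseteq> Tt l" using f(2) l unfolding Tt_def by blast
      then have "F \<in> two_forests V (Tt l) a b" using F unfolding two_forests_def by blast
      then show False using F l(1) by blast
    qed
    then show "F \<in> (\<lambda>f. Tt i - {f}) ` (Sset a b i - ce ` {..<i})" using f by blast
  qed
next
  show "(\<lambda>f. Tt i - {f}) ` (Sset a b i - ce ` {..<i}) \<subseteq> two_forests V (Tt i) a b - (\<Union>l<i. two_forests V (Tt l) a b)"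
  proof
    fix F assume "F \<in> (\<lambda>f. Tt i - {f}) ` (Sset a b i - ce ` {..<i})"
    then obtain f where f: "f \<in> Sset a b i" "f \<notin> ce ` {..<i}" "F = Tt i - {f}" by blast
    have F1: "F \<in> two_forests V (Tt i) a b" using GL[OF Tt_tree[OF i] a b] f unfolding Sset_def by blast
    have "F \<notin> two_forests V (Tt l) a b" if l: "l < i" for l
    proof
      assume "F \<in> two_forests V (Tt l) a b"
      then have "F \<subseteq> Tt l" unfolding two_forests_def by blast
      moreover have "ce l \<in> F"
      proof -
        have "ce l \<in> Ep" using ce_Cy[of l] l i unfolding Ep_eq by auto
        moreover have "ce l \<noteq> ce i" using ce_inj[of l i] l i by simp
        moreover have "ce l \<noteq> f" using f(2) l by blast
        ultimately show ?thesis using f(3) unfolding Tt_def by blast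
      qed
      ultimately show False unfolding Tt_def by blast
    qed
    then show "F \<in> two_forests V (Tt i) a b - (\<Union>l<i. two_forests V (Tt l) a b)" using F1 by blast
  qed
qed

definition SE :: "'a \<Rightarrow> 'a \<Rightarrow> 'a set set" where "SE a b = {f \<in> E. \<not> reach (E - {f}) a b}"

lemma Sset_decomp:
  assumes i: "i < c"
  shows "Sset a b i - ce ` {..<i} = (E0 \<inter> SE a b) \<union> ce ` {l. i < l \<and> l < c \<and> \<not> reach (Ep - {ce i, ce l}) a b}"
proof
  show "Sset a b i - ce ` {..<i} \<subseteq> (E0 \<inter> SE a b) \<union> ce ` {l. i < l \<and> l < c \<and> \<not> reach (Ep - {ce i, ce l}) a b}"
  proof
    fix f assume f: "f \<in> Sset a b i - ce ` {..<i}"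
    then have fT: "f \<in> Tt i" and nr: "\<not> reach (Tt i - {f}) a b" and fn: "f \<notin> ce ` {..<i}"
      unfolding Sset_def by auto
    have tf: "Tt i - {f} = Ep - {ce i, f}" unfolding Tt_def by blast
    have "f \<in> E0 \<or> f \<in> Cy" using fT unfolding Tt_def Ep_eq by blast
    then show "f \<in> (E0 \<inter> SE a b) \<union> ce ` {l. i < l \<and> l < c \<and> \<not> reach (Ep - {ce i, ce l}) a b}"
    proof
      assume f0: "f \<in> E0"
      then have "\<not> reach (E - {f}) a b" using nr off[OF f0 i] tf by simp
      then show ?thesis using f0 E0_E unfolding SE_def by blast
    next
      assume "f \<in> Cy"
      then obtain l where l: "l < c" "f = ce l" unfolding Cy_def by blast
      have "l \<noteq> i" using fT l unfolding Tt_def by blast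
      moreover have "\<not> l < i" using fn l by blast
      ultimately have "i < l" by simp
      moreover have "\<not> reach (Ep - {ce i, ce l}) a b" using nr tf l(2) by simp
      ultimately have "l \<in> {l. i < l \<and> l < c \<and> \<not> reach (Ep - {ce i, ce l}) a b}" using l(1) by simp
      then have "f \<in> ce ` {l. i < l \<and> l < c \<and> \<not> reach (Ep - {ce i, ce l}) a b}" using l(2) by (rule rev_image_eqI)
      then show ?thesis by (rule UnI2)
    qed
  qed
next
  show "(E0 \<inter> SE a b) \<union> ce ` {l. i < l \<and> l < c \<and> \<not> reach (Ep - {ce i, ce l}) a b} \<subseteq> Sset a b i - ce ` {..<i}"
  proof
    fix f assume "f \<in> (E0 \<inter> SE a b) \<union> ce ` {l. i < l \<and> l < c \<and> \<not> reach (Ep - {ce i, ce l}) a b}"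
    then show "f \<in> Sset a b i - ce ` {..<i}"
    proof
      assume f: "f \<in> E0 \<inter> SE a b"
      have fE0: "f \<in> E0" using f by blast
      have nC: "f \<notin> Cy" using fE0 E0_Cy by blast
      have fT: "f \<in> Tt i" using fE0 nC ce_Cy[OF i] unfolding Tt_def Ep_eq by blast
      have tf: "Tt i - {f} = Ep - {ce i, f}" unfolding Tt_def by blast
      have "\<not> reach (E - {f}) a b" using f unfolding SE_def by blast
      then have "\<not> reach (Tt i - {f}) a b" using off[OF fE0 i] tf by simp
      moreover have "f \<notin> ce ` {..<i}"
      proof
        assume "f \<in> ce ` {..<i}"
        then obtain m where "m < i" "f = ce m" by blast
        then show False using nC ce_Cy[of m] i by simp
      qed
      ultimately show ?thesis using fT unfolding Sset_def by blast
    next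
      assume "f \<in> ce ` {l. i < l \<and> l < c \<and> \<not> reach (Ep - {ce i, ce l}) a b}"
      then obtain l where l: "i < l" "l < c" "\<not> reach (Ep - {ce i, ce l}) a b" "f = ce l" by blast
      have ne: "ce l \<noteq> ce i" using ce_inj[of l i] l i by simp
      have fT: "f \<in> Tt i" using l(2,4) ne ce_Cy[of l] unfolding Tt_def Ep_eq by blast
      have tf: "Tt i - {f} = Ep - {ce i, ce l}" unfolding Tt_def l(4) by blast
      have "f \<notin> ce ` {..<i}"
      proof
        assume "f \<in> ce ` {..<i}"
        then obtain m where "m < i" "ce l = ce m" using l(4) by blast
        then show False using ce_inj[of l m] l i by simp
      qed
      then show ?thesis using fT l(3) tf unfolding Sset_def by simp
    qed
  qed
qed

lemma SE_decomp:
  "SE a b = (E0 \<inter> SE a b) \<union> ce ` {l. l < c - 1 \<and> \<not> reach (Ep - {ce l, ce (c - 1)}) a b}"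
proof -
  have e: "Ep - {ce l, ce (c - 1)} = E - {ce l}" for l
  proof -
    have "Ep - {ce l, ce (c - 1)} = (insert {hd vs, last vs} E - {{hd vs, last vs}}) - {ce l}"
      unfolding Ep_def ce_last by blast
    also have "\<dots> = E - {ce l}" using Diff_insert_absorb[OF g_notin] by simp
    finally show ?thesis .
  qed
  show ?thesis
  proof
    show "SE a b \<subseteq> (E0 \<inter> SE a b) \<union> ce ` {l. l < c - 1 \<and> \<not> reach (Ep - {ce l, ce (c - 1)}) a b}"
    proof
      fix f assume f: "f \<in> SE a b"
      then have "f \<in> E" unfolding SE_def by blast
      then have "f \<in> E0 \<or> f \<in> P" unfolding E0_def by blast
      then show "f \<in> (E0 \<inter> SE a b) \<union> ce ` {l. l < c - 1 \<and> \<not> reach (Ep - {ce l, ce (c - 1)}) a b}"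
      proof
        assume "f \<in> P"
        then obtain l where l: "l < c - 1" "f = ce l" unfolding P_def by blast
        have "\<not> reach (E - {f}) a b" using f unfolding SE_def by blast
        then have "\<not> reach (Ep - {ce l, ce (c - 1)}) a b" using e[of l] l(2) by simp
        then have "l \<in> {l. l < c - 1 \<and> \<not> reach (Ep - {ce l, ce (c - 1)}) a b}" using l(1) by simp
        then have "f \<in> ce ` {l. l < c - 1 \<and> \<not> reach (Ep - {ce l, ce (c - 1)}) a b}" using l(2) by (rule rev_image_eqI)
        then show ?thesis by (rule UnI2)
      next
        assume "f \<in> E0"
        then show ?thesis using f by blast
      qed
    qed
  next
    show "(E0 \<inter> SE a b) \<union> ce ` {l. l < c - 1 \<and> \<not> reach (Ep - {ce l, ce (c - 1)}) a b} \<subseteq> SE a b"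
    proof
      fix f assume "f \<in> (E0 \<inter> SE a b) \<union> ce ` {l. l < c - 1 \<and> \<not> reach (Ep - {ce l, ce (c - 1)}) a b}"
      then show "f \<in> SE a b"
      proof
        assume "f \<in> ce ` {l. l < c - 1 \<and> \<not> reach (Ep - {ce l, ce (c - 1)}) a b}"
        then obtain l where l: "l < c - 1" "\<not> reach (Ep - {ce l, ce (c - 1)}) a b" "f = ce l" by blast
        have "f \<in> E" using ce_E l by simp
        then show ?thesis using l e[of l] unfolding SE_def by simp
      qed blast
    qed
  qed
qed

end

lemma count1s:
  assumes "j < c" "k < c"
  shows "card {l. l < c - 1 \<and> (l < j \<and> j \<le> c - 1) \<noteq> (l < k \<and> k \<le> c - 1)} = (if j \<le> k then k - j else j - k)"
proof (cases "j \<le> k")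
  case True then show ?thesis using count1[OF assms True] by simp
next
  case False
  then have kj: "k \<le> j" by simp
  have "{l. l < c - 1 \<and> (l < j \<and> j \<le> c - 1) \<noteq> (l < k \<and> k \<le> c - 1)} = {l. l < c - 1 \<and> (l < k \<and> k \<le> c - 1) \<noteq> (l < j \<and> j \<le> c - 1)}"
    by blast
  then show ?thesis using count1[OF assms(2,1) kj] False by simp
qed

lemma count2s:
  assumes "j < c" "k < c"
  shows "card {(i, l). i < l \<and> l < c \<and> (i < j \<and> j \<le> l) \<noteq> (i < k \<and> k \<le> l)}
     = (if j \<le> k then k - j else j - k) * (c - (if j \<le> k then k - j else j - k))"
proof (cases "j \<le> k")
  case True then show ?thesis using count2[OF assms True] by simp
next
  case False
  then have kj: "k \<le> j" by simp
  have "{(i, l). i < l \<and> l < c \<and> (i < j \<and> j \<le> l) \<noteq> (i < k \<and> k \<le> l)} = {(i, l). i < l \<and> l < c \<and> (i < k \<and> k \<le> l) \<noteq> (i < j \<and> j \<le> l)}"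
    by blast
  then show ?thesis using count2[OF assms(2,1) kj] False by simp
qed

context cyc begin

lemma fin_tf: "finite (two_forests V (Tt i) a b)"
proof -
  have "two_forests V (Tt i) a b \<subseteq> Pow Ep" unfolding two_forests_def Tt_def by blast
  then show ?thesis using finEp finite_subset by blast
qed

lemma sigma_formula:
  assumes a: "a \<in> V" and b: "b \<in> V"
  shows "int (sigma V Ep a b) = int c * int (gdist E a b) - (int (idx a) - int (idx b))^2"
proof -
  define j where "j = idx a"
  define k where "k = idx b"
  have j: "j < c" and k: "k < c" using idx_prop(1)[OF a] idx_prop(1)[OF b] unfolding j_def k_def by auto
  define D where "D i = {l. i < l \<and> l < c \<and> \<not> reach (Ep - {ce i, ce l}) a b}" for i
  define X where "X = card (E0 \<inter> SE a b)"
  have finX: "finite (E0 \<inter> SE a b)" using finE E0_E finite_subset by blast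
  have h1: "sigma V Ep a b = (\<Sum>i<c. card (two_forests V (Tt i) a b - (\<Union>l<i. two_forests V (Tt l) a b)))"
    unfolding sigma_def union_eq by (rule card_union_disj) (rule fin_tf)
  have h2: "card (two_forests V (Tt i) a b - (\<Union>l<i. two_forests V (Tt l) a b)) = X + card (D i)" if i: "i < c" for i
  proof -
    have inj: "inj_on (\<lambda>f. Tt i - {f}) (Sset a b i - ce ` {..<i})"
    proof (rule inj_onI)
      fix f f' assume f: "f \<in> Sset a b i - ce ` {..<i}" and f': "f' \<in> Sset a b i - ce ` {..<i}"
        and eq: "Tt i - {f} = Tt i - {f'}"
      have "f \<in> Tt i" "f' \<in> Tt i" using f f' unfolding Sset_def by auto
      then show "f = f'" using eq by blast
    qed
    have c1: "card (two_forests V (Tt i) a b - (\<Union>l<i. two_forests V (Tt l) a b)) = card (Sset a b i - ce ` {..<i})"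
      unfolding term_eq[OF i a b] using card_image[OF inj] .
    have dis: "(E0 \<inter> SE a b) \<inter> ce ` D i = {}"
    proof -
      have "ce ` D i \<subseteq> Cy" unfolding D_def Cy_def by auto
      then show ?thesis using E0_Cy by blast
    qed
    have finD: "finite (D i)" unfolding D_def by simp
    have injD: "inj_on ce (D i)"
      unfolding D_def by (rule inj_on_subset[OF ce_inj_on]) auto
    have "card (Sset a b i - ce ` {..<i}) = card ((E0 \<inter> SE a b) \<union> ce ` D i)"
      unfolding Sset_decomp[OF i] D_def ..
    also have "\<dots> = X + card (ce ` D i)" unfolding X_def using card_Un_disjoint[OF finX _ dis] finD by simp
    also have "\<dots> = X + card (D i)" using card_image[OF injD] by simp
    finally show ?thesis using c1 by simp
  qed
  have h3: "D i = {l. i < l \<and> l < c \<and> (i < j \<and> j \<le> l) \<noteq> (i < k \<and> k \<le> l)}" for i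
    unfolding D_def
  proof (intro Collect_cong)
    fix l
    show "(i < l \<and> l < c \<and> \<not> reach (Ep - {ce i, ce l}) a b) \<longleftrightarrow> (i < l \<and> l < c \<and> (i < j \<and> j \<le> l) \<noteq> (i < k \<and> k \<le> l))"
    proof (cases "i < l \<and> l < c")
      case True
      then have "reach (Ep - {ce i, ce l}) a b \<longleftrightarrow> side i l j = side i l k"
        using arc[OF _ _ a b, of i l] unfolding j_def k_def by blast
      then show ?thesis using True unfolding side_def by blast
    qed blast
  qed
  have h4: "(\<Sum>i<c. card (D i)) = card {(i, l). i < l \<and> l < c \<and> (i < j \<and> j \<le> l) \<noteq> (i < k \<and> k \<le> l)}"
  proof -
    have "(\<Sum>i<c. card (D i)) = card (SIGMA i:{..<c}. D i)"
      using card_SigmaI[of "{..<c}" D] unfolding D_def by simp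
    also have "(SIGMA i:{..<c}. D i) = {(i, l). i < l \<and> l < c \<and> (i < j \<and> j \<le> l) \<noteq> (i < k \<and> k \<le> l)}"
      unfolding h3 by auto
    finally show ?thesis .
  qed
  define G where "G = {l. l < c - 1 \<and> \<not> reach (Ep - {ce l, ce (c - 1)}) a b}"
  have h5: "gdist E a b = X + card G"
  proof -
    have "gdist E a b = card (SE a b)" unfolding SE_def using gdist_card[OF tree2E a b] .
    also have "\<dots> = card ((E0 \<inter> SE a b) \<union> ce ` G)" unfolding G_def using SE_decomp by simp
    also have "\<dots> = X + card (ce ` G)"
    proof -
      have "ce ` G \<subseteq> Cy" unfolding G_def Cy_def by auto
      then have "(E0 \<inter> SE a b) \<inter> ce ` G = {}" using E0_Cy by blast
      moreover have "finite G" unfolding G_def by simp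
      ultimately show ?thesis unfolding X_def using card_Un_disjoint[OF finX] by simp
    qed
    also have "\<dots> = X + card G"
    proof -
      have "inj_on ce G" unfolding G_def by (rule inj_on_subset[OF ce_inj_on]) auto
      then show ?thesis using card_image[of ce G] by simp
    qed
    finally show ?thesis .
  qed
  have h6: "G = {l. l < c - 1 \<and> (l < j \<and> j \<le> c - 1) \<noteq> (l < k \<and> k \<le> c - 1)}"
  proof -
    have cl: "c - 1 < c" using c_pos by simp
    show ?thesis unfolding G_def
    proof (intro Collect_cong)
      fix l
      show "(l < c - 1 \<and> \<not> reach (Ep - {ce l, ce (c - 1)}) a b) \<longleftrightarrow> (l < c - 1 \<and> (l < j \<and> j \<le> c - 1) \<noteq> (l < k \<and> k \<le> c - 1))"
      proof (cases "l < c - 1")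
        case True
        then have "reach (Ep - {ce l, ce (c - 1)}) a b \<longleftrightarrow> side l (c - 1) j = side l (c - 1) k"
          using arc[OF _ cl a b, of l] unfolding j_def k_def by blast
        then show ?thesis using True unfolding side_def by blast
      qed blast
    qed
  qed
  define m where "m = (if j \<le> k then k - j else j - k)"
  have cG: "card G = m" unfolding h6 m_def using count1s[OF j k] .
  have cP: "(\<Sum>i<c. card (D i)) = m * (c - m)" unfolding h4 m_def using count2s[OF j k] .
  have mc: "m \<le> c" unfolding m_def using j k by auto
  have sig: "sigma V Ep a b = c * X + m * (c - m)"
  proof -
    have "sigma V Ep a b = (\<Sum>i<c. X + card (D i))" unfolding h1 using h2 by simp
    also have "\<dots> = c * X + (\<Sum>i<c. card (D i))" by (simp add: sum.distrib)
    finally show ?thesis using cP by simp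
  qed
  have gd: "gdist E a b = X + m" using h5 cG by simp
  have sq: "(int j - int k)^2 = (int m)^2"
  proof (cases "j \<le> k")
    case True
    then have "int m = int k - int j" unfolding m_def by simp
    then show ?thesis by (simp add: power2_commute)
  next
    case False
    then have "int m = int j - int k" unfolding m_def by simp
    then show ?thesis by simp
  qed
  have "int (sigma V Ep a b) = int c * int X + int m * (int c - int m)"
    using sig mc by (simp add: of_nat_diff)
  also have "\<dots> = int c * int (gdist E a b) - (int j - int k)^2"
    unfolding gd sq by (simp add: power2_eq_square algebra_simps)
  finally show ?thesis unfolding j_def k_def .
qed

end

theorem lemma2p1:
  fixes V :: "'a set" and E :: "'a set set" and vs :: "'a list"
  assumes "is_tree V E"
    and "walk E vs" and "distinct vs"
    and "hd vs \<in> V" and "last vs \<in> V" and "hd vs \<noteq> last vs"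
    and "{hd vs, last vs} \<notin> E"
  shows "(\<forall>x\<in>V. \<exists>!j. j < length vs \<and> x \<in> subtree V E vs j) \<and>
         (\<forall>j < length vs. \<forall>k < length vs. \<forall>a \<in> subtree V E vs j. \<forall>b \<in> subtree V E vs k.
            int (sigma V (insert {hd vs, last vs} E) a b)
              = int (length vs) * int (gdist E a b) - (int j - int k)^2)"
proof -
  interpret cyc V E vs using assms by unfold_locales
  have part1: "\<exists>!j. j < length vs \<and> x \<in> subtree V E vs j" if x: "x \<in> V" for x
  proof -
    have "\<exists>!j. j < length vs \<and> reach E0 x (vs ! j)" using ex_idx[OF x] idx_unique by blast
    moreover have "j < length vs \<and> x \<in> subtree V E vs j \<longleftrightarrow> j < length vs \<and> reach E0 x (vs ! j)" for j
      using subtree_eq[of j] x by auto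
    ultimately show ?thesis by simp
  qed
  have part2: "int (sigma V (insert {hd vs, last vs} E) a b)
              = int (length vs) * int (gdist E a b) - (int j - int k)^2"
    if j: "j < length vs" and k: "k < length vs" and a: "a \<in> subtree V E vs j" and b: "b \<in> subtree V E vs k"
    for j k a b
  proof -
    have aV: "a \<in> V" and ra: "reach E0 a (vs ! j)" using a subtree_eq[OF j] by auto
    have bV: "b \<in> V" and rb: "reach E0 b (vs ! k)" using b subtree_eq[OF k] by auto
    have "idx a = j" using idx_eq[OF aV j ra] .
    moreover have "idx b = k" using idx_eq[OF bV k rb] .
    ultimately show ?thesis using sigma_formula[OF aV bV] unfolding Ep_def by simp
  qed
  show ?thesis using part1 part2 by blast
qed

end
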